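(* Let $(\mathscr{C},\mathbb{E},\mathfrak{s})$ be an extriangulated category such that for every object $A$ the morphism $A\to 0$ is an $\mathbb{E}$-inflation and $0\to A$ is an $\mathbb{E}$-deflation, and let $\Sigma$ be as in the context. Then the functor $\mathbf{E}^1\colon\mathscr{C}^{\mathrm{op}}\times\mathscr{C}\to Ab$, $\mathbf{E}^1(-,-)=\mathscr{C}(-,\Sigma -)$, is biadditive.
   Context: An extriangulated category $(\mathscr{C},\mathbb{E},\mathfrak{s})$ is in the sense of Nakaoka–Palu: $\mathscr{C}$ additive, $\mathbb{E}\colon\mathscr{C}^{\mathrm{op}}\times\mathscr{C}\to Ab$ biadditive, $\mathfrak{s}$ an additive realisation assigning to $\delta\in\mathbb{E}(C,A)$ an equivalence class of sequences $[A\to B\to C]$, satisfying (ET1)–(ET4)$^{\mathrm{op}}$. For $a\colon A\to A'$ and $c\colon C'\to C$ write $a_*\delta=\mathbb{E}(C,a)(\delta)$ and $c^*\delta=\mathbb{E}(c,A)(\delta)$. A morphism $x\colon A\to B$ is an $\mathbb{E}$-inflation if $\mathfrak{s}(\delta)=[A\xrightarrow{x}B\to C]$ for some $\delta\in\mathbb{E}(C,A)$; dually for $\mathbb{E}$-deflations. For each object $Y$, $\Sigma Y$ is a chosen object with $\delta_Y\in\mathbb{E}(\Sigma Y,Y)$ such that $\mathfrak{s}(\delta_Y)=[Y\to 0\to\Sigma Y]$; for $f\colon X\to Y$, $\Sigma f$ is the unique morphism $\Sigma X\to\Sigma Y$ with $f_*\delta_X=(\Sigma f)^*\delta_Y$;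 $\Sigma$ is a functor. *)

theory Defs
  imports "HOL-Algebra.Group"
begin

section \<open>Additive categories (hom-sets are abelian groups, written multiplicatively in HOL-Algebra)\<close>

record ('o, 'm) precat =
  Ob   :: "'o set"
  HomG :: "'o \<Rightarrow> 'o \<Rightarrow> 'm monoid"
  cmp  :: "'m \<Rightarrow> 'm \<Rightarrow> 'm"           (* cmp C g f = g \<circ> f *)
  idm  :: "'o \<Rightarrow> 'm"

definition Hom :: "('o, 'm, 'z) precat_scheme \<Rightarrow> 'o \<Rightarrow> 'o \<Rightarrow> 'm set" where
  "Hom C X Y = carrier (HomG C X Y)"

definition zm :: "('o, 'm, 'z) precat_scheme \<Rightarrow> 'o \<Rightarrow> 'o \<Rightarrow> 'm" where
  "zm C X Y = \<one>\<^bsub>HomG C X Y\<^esub>"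

definition madd :: "('o, 'm, 'z) precat_scheme \<Rightarrow> 'o \<Rightarrow> 'o \<Rightarrow> 'm \<Rightarrow> 'm \<Rightarrow> 'm" where
  "madd C X Y f g = f \<otimes>\<^bsub>HomG C X Y\<^esub> g"

definition is_iso :: "('o, 'm, 'z) precat_scheme \<Rightarrow> 'o \<Rightarrow> 'o \<Rightarrow> 'm \<Rightarrow> bool" where
  "is_iso C X Y f \<longleftrightarrow> f \<in> Hom C X Y \<and>
     (\<exists>g \<in> Hom C Y X. cmp C g f = idm C X \<and> cmp C f g = idm C Y)"

definition is_zero_obj :: "('o, 'm, 'z) precat_scheme \<Rightarrow> 'o \<Rightarrow> bool" where
  "is_zero_obj C Z \<longleftrightarrow> Z \<in> Ob C \<and>
     (\<forall>X \<in> Ob C. card (Hom C X Z) = 1 \<and> card (Hom C Z X) = 1)"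

definition is_biproduct :: "('o, 'm, 'z) precat_scheme \<Rightarrow> 'o \<Rightarrow> 'o \<Rightarrow> 'o \<Rightarrow>
    'm \<Rightarrow> 'm \<Rightarrow> 'm \<Rightarrow> 'm \<Rightarrow> bool" where
  "is_biproduct C A B P i1 i2 p1 p2 \<longleftrightarrow>
     P \<in> Ob C \<and> i1 \<in> Hom C A P \<and> i2 \<in> Hom C B P \<and> p1 \<in> Hom C P A \<and> p2 \<in> Hom C P B \<and>
     cmp C p1 i1 = idm C A \<and> cmp C p2 i2 = idm C B \<and>
     cmp C p2 i1 = zm C A B \<and> cmp C p1 i2 = zm C B A \<and>
     madd C P P (cmp C i1 p1) (cmp C i2 p2) = idm C P"

definition additive_cat :: "('o, 'm, 'z) precat_scheme \<Rightarrow> bool" where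
  "additive_cat C \<longleftrightarrow>
    (\<forall>X \<in> Ob C. \<forall>Y \<in> Ob C. comm_group (HomG C X Y)) \<and>
    (\<forall>X \<in> Ob C. \<forall>Y \<in> Ob C. \<forall>Z \<in> Ob C. \<forall>f \<in> Hom C X Y. \<forall>g \<in> Hom C Y Z.
        cmp C g f \<in> Hom C X Z) \<and>
    (\<forall>W \<in> Ob C. \<forall>X \<in> Ob C. \<forall>Y \<in> Ob C. \<forall>Z \<in> Ob C.
       \<forall>f \<in> Hom C W X. \<forall>g \<in> Hom C X Y. \<forall>h \<in> Hom C Y Z.
        cmp C h (cmp C g f) = cmp C (cmp C h g) f) \<and>
    (\<forall>X \<in> Ob C. idm C X \<in> Hom C X X) \<and>
    (\<forall>X \<in> Ob C. \<forall>Y \<in> Ob C. \<forall>f \<in> Hom C X Y.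
        cmp C f (idm C X) = f \<and> cmp C (idm C Y) f = f) \<and>
    (\<forall>X \<in> Ob C. \<forall>Y \<in> Ob C. \<forall>Z \<in> Ob C. \<forall>f1 \<in> Hom C X Y. \<forall>f2 \<in> Hom C X Y. \<forall>g \<in> Hom C Y Z.
        cmp C g (madd C X Y f1 f2) = madd C X Z (cmp C g f1) (cmp C g f2)) \<and>
    (\<forall>X \<in> Ob C. \<forall>Y \<in> Ob C. \<forall>Z \<in> Ob C. \<forall>f \<in> Hom C X Y. \<forall>g1 \<in> Hom C Y Z. \<forall>g2 \<in> Hom C Y Z.
        cmp C (madd C Y Z g1 g2) f = madd C X Z (cmp C g1 f) (cmp C g2 f)) \<and>
    (\<exists>Z. is_zero_obj C Z) \<and>
    (\<forall>A \<in> Ob C. \<forall>B \<in> Ob C. \<exists>P i1 i2 p1 p2. is_biproduct C A B P i1 i2 p1 p2)"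

text \<open>G X Y is the abelian group F(X,Y); pl X' X c : F(X,Y) -> F(X',Y) for c : X' -> X
  (contravariant action), pr Y Y' a : F(X,Y) -> F(X,Y') for a : Y -> Y' (covariant action).\<close>

definition biadditive :: "('o, 'm, 'z) precat_scheme \<Rightarrow> ('o \<Rightarrow> 'o \<Rightarrow> 'g monoid) \<Rightarrow>
    ('o \<Rightarrow> 'o \<Rightarrow> 'm \<Rightarrow> 'g \<Rightarrow> 'g) \<Rightarrow> ('o \<Rightarrow> 'o \<Rightarrow> 'm \<Rightarrow> 'g \<Rightarrow> 'g) \<Rightarrow> bool" where
  "biadditive C G pl pr \<longleftrightarrow>
    (\<forall>X \<in> Ob C. \<forall>Y \<in> Ob C. comm_group (G X Y)) \<and>
    (\<forall>X \<in> Ob C. \<forall>Y \<in> Ob C. \<forall>Y' \<in> Ob C. \<forall>a \<in> Hom C Y Y'.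
        pr Y Y' a \<in> hom (G X Y) (G X Y')) \<and>
    (\<forall>X \<in> Ob C. \<forall>X' \<in> Ob C. \<forall>Y \<in> Ob C. \<forall>c \<in> Hom C X' X.
        pl X' X c \<in> hom (G X Y) (G X' Y)) \<and>
    (\<forall>X \<in> Ob C. \<forall>Y \<in> Ob C. \<forall>u \<in> carrier (G X Y).
        pr Y Y (idm C Y) u = u \<and> pl X X (idm C X) u = u) \<and>
    (\<forall>X \<in> Ob C. \<forall>Y \<in> Ob C. \<forall>Y' \<in> Ob C. \<forall>Y'' \<in> Ob C.
       \<forall>a \<in> Hom C Y Y'. \<forall>a' \<in> Hom C Y' Y''. \<forall>u \<in> carrier (G X Y).
        pr Y Y'' (cmp C a' a) u = pr Y' Y'' a' (pr Y Y' a u)) \<and>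
    (\<forall>X \<in> Ob C. \<forall>X' \<in> Ob C. \<forall>X'' \<in> Ob C. \<forall>Y \<in> Ob C.
       \<forall>c \<in> Hom C X' X. \<forall>c' \<in> Hom C X'' X'. \<forall>u \<in> carrier (G X Y).
        pl X'' X (cmp C c c') u = pl X'' X' c' (pl X' X c u)) \<and>
    (\<forall>X \<in> Ob C. \<forall>X' \<in> Ob C. \<forall>Y \<in> Ob C. \<forall>Y' \<in> Ob C.
       \<forall>c \<in> Hom C X' X. \<forall>a \<in> Hom C Y Y'. \<forall>u \<in> carrier (G X Y).
        pl X' X c (pr Y Y' a u) = pr Y Y' a (pl X' X c u)) \<and>
    (\<forall>X \<in> Ob C. \<forall>Y \<in> Ob C. \<forall>Y' \<in> Ob C. \<forall>a1 \<in> Hom C Y Y'. \<forall>a2 \<in> Hom C Y Y'.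
       \<forall>u \<in> carrier (G X Y).
        pr Y Y' (madd C Y Y' a1 a2) u = pr Y Y' a1 u \<otimes>\<^bsub>G X Y'\<^esub> pr Y Y' a2 u) \<and>
    (\<forall>X \<in> Ob C. \<forall>X' \<in> Ob C. \<forall>Y \<in> Ob C. \<forall>c1 \<in> Hom C X' X. \<forall>c2 \<in> Hom C X' X.
       \<forall>u \<in> carrier (G X Y).
        pl X' X (madd C X' X c1 c2) u = pl X' X c1 u \<otimes>\<^bsub>G X' Y\<^esub> pl X' X c2 u)"

record ('o, 'm, 'e) extri = "('o, 'm) precat" +
  EG    :: "'o \<Rightarrow> 'o \<Rightarrow> 'e monoid"
  pushE :: "'m \<Rightarrow> 'e \<Rightarrow> 'e"
  pullE :: "'m \<Rightarrow> 'e \<Rightarrow> 'e"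
  realE :: "'o \<Rightarrow> 'o \<Rightarrow> 'e \<Rightarrow> 'o \<Rightarrow> 'm \<Rightarrow> 'm \<Rightarrow> bool"
     (* realE C' A \<delta> B x y : the sequence A -x-> B -y-> C' belongs to the class s(\<delta>), \<delta> \<in> E(C',A) *)

definition Ext :: "('o, 'm, 'e, 'z) extri_scheme \<Rightarrow> 'o \<Rightarrow> 'o \<Rightarrow> 'e set" where
  "Ext T C A = carrier (EG T C A)"

definition realization_ax :: "('o, 'm, 'e, 'z) extri_scheme \<Rightarrow> bool" where
  "realization_ax T \<longleftrightarrow>
    (\<forall>Cc A \<delta> B x y. realE T Cc A \<delta> B x y \<longrightarrow>
        Cc \<in> Ob T \<and> A \<in> Ob T \<and> \<delta> \<in> Ext T Cc A \<and> B \<in> Ob T \<and> x \<in> Hom T A B \<and> y \<in> Hom T B Cc) \<and>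
    (\<forall>A \<in> Ob T. \<forall>Cc \<in> Ob T. \<forall>\<delta> \<in> Ext T Cc A. \<exists>B x y. realE T Cc A \<delta> B x y) \<and>
    (\<forall>A Cc \<delta> B x y B' x' y'. realE T Cc A \<delta> B x y \<longrightarrow>
        (realE T Cc A \<delta> B' x' y' \<longleftrightarrow>
          B' \<in> Ob T \<and> x' \<in> Hom T A B' \<and> y' \<in> Hom T B' Cc \<and>
          (\<exists>b. is_iso T B B' b \<and> cmp T b x = x' \<and> cmp T y' b = y))) \<and>
    (\<forall>A Cc \<delta> B x y A' Cc' \<delta>' B' x' y' a c.
        realE T Cc A \<delta> B x y \<longrightarrow> realE T Cc' A' \<delta>' B' x' y' \<longrightarrow>
        a \<in> Hom T A A' \<longrightarrow> c \<in> Hom T Cc Cc' \<longrightarrow> pushE T a \<delta> = pullE T c \<delta>' \<longrightarrow>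
        (\<exists>b \<in> Hom T B B'. cmp T b x = cmp T x' a \<and> cmp T y' b = cmp T c y))"

definition additive_realization_ax :: "('o, 'm, 'e, 'z) extri_scheme \<Rightarrow> bool" where
  "additive_realization_ax T \<longleftrightarrow>
    (\<forall>A \<in> Ob T. \<forall>Cc \<in> Ob T. \<forall>P i1 i2 p1 p2. is_biproduct T A Cc P i1 i2 p1 p2 \<longrightarrow>
        realE T Cc A (\<one>\<^bsub>EG T Cc A\<^esub>) P i1 p2) \<and>
    (\<forall>A Cc \<delta> B x y A' Cc' \<delta>' B' x' y'
       PA iA1 iA2 pA1 pA2 PB iB1 iB2 pB1 pB2 PC iC1 iC2 pC1 pC2.
        realE T Cc A \<delta> B x y \<longrightarrow> realE T Cc' A' \<delta>' B' x' y' \<longrightarrow>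
        is_biproduct T A A' PA iA1 iA2 pA1 pA2 \<longrightarrow>
        is_biproduct T B B' PB iB1 iB2 pB1 pB2 \<longrightarrow>
        is_biproduct T Cc Cc' PC iC1 iC2 pC1 pC2 \<longrightarrow>
        realE T PC PA
          (pushE T iA1 (pullE T pC1 \<delta>) \<otimes>\<^bsub>EG T PC PA\<^esub> pushE T iA2 (pullE T pC2 \<delta>'))
          PB
          (madd T PA PB (cmp T iB1 (cmp T x pA1)) (cmp T iB2 (cmp T x' pA2)))
          (madd T PB PC (cmp T iC1 (cmp T y pB1)) (cmp T iC2 (cmp T y' pB2))))"

definition ET3 :: "('o, 'm, 'e, 'z) extri_scheme \<Rightarrow> bool" where
  "ET3 T \<longleftrightarrow>
    (\<forall>A Cc \<delta> B x y A' Cc' \<delta>' B' x' y' a b.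
        realE T Cc A \<delta> B x y \<longrightarrow> realE T Cc' A' \<delta>' B' x' y' \<longrightarrow>
        a \<in> Hom T A A' \<longrightarrow> b \<in> Hom T B B' \<longrightarrow> cmp T b x = cmp T x' a \<longrightarrow>
        (\<exists>c \<in> Hom T Cc Cc'. cmp T c y = cmp T y' b \<and> pushE T a \<delta> = pullE T c \<delta>'))"

definition ET3op :: "('o, 'm, 'e, 'z) extri_scheme \<Rightarrow> bool" where
  "ET3op T \<longleftrightarrow>
    (\<forall>A Cc \<delta> B x y A' Cc' \<delta>' B' x' y' b c.
        realE T Cc A \<delta> B x y \<longrightarrow> realE T Cc' A' \<delta>' B' x' y' \<longrightarrow>
        b \<in> Hom T B B' \<longrightarrow> c \<in> Hom T Cc Cc' \<longrightarrow> cmp T y' b = cmp T c y \<longrightarrow>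
        (\<exists>a \<in> Hom T A A'. cmp T x' a = cmp T b x \<and> pushE T a \<delta> = pullE T c \<delta>'))"

definition ET4 :: "('o, 'm, 'e, 'z) extri_scheme \<Rightarrow> bool" where
  "ET4 T \<longleftrightarrow>
    (\<forall>A B Cc D F f f' g g' \<delta> \<delta>'.
        realE T D A \<delta> B f f' \<longrightarrow> realE T F B \<delta>' Cc g g' \<longrightarrow>
        (\<exists>E d e \<delta>'' h'. E \<in> Ob T \<and> d \<in> Hom T D E \<and> e \<in> Hom T E F \<and>
           \<delta>'' \<in> Ext T E A \<and> h' \<in> Hom T Cc E \<and>
           realE T E A \<delta>'' Cc (cmp T g f) h' \<and>
           realE T F D (pushE T f' \<delta>') E d e \<and>
           pullE T d \<delta>'' = \<delta> \<and> pushE T f \<delta>'' = pullE T e \<delta>' \<and>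
           cmp T h' g = cmp T d f' \<and> cmp T e h' = g'))"

definition ET4op :: "('o, 'm, 'e, 'z) extri_scheme \<Rightarrow> bool" where
  "ET4op T \<longleftrightarrow>
    (\<forall>A B Cc D F f f' g g' \<delta> \<delta>'.
        realE T A D \<delta> B f' f \<longrightarrow> realE T B F \<delta>' Cc g' g \<longrightarrow>
        (\<exists>E d e \<delta>'' h'. E \<in> Ob T \<and> d \<in> Hom T E D \<and> e \<in> Hom T F E \<and>
           \<delta>'' \<in> Ext T A E \<and> h' \<in> Hom T E Cc \<and>
           realE T A E \<delta>'' Cc h' (cmp T f g) \<and>
           realE T D F (pullE T f' \<delta>') E e d \<and>
           pushE T d \<delta>'' = \<delta> \<and> pullE T f \<delta>'' = pushE T e \<delta>' \<and>
           cmp T g h' = cmp T f' d \<and> cmp T h' e = g'))"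

definition extriangulated :: "('o, 'm, 'e, 'z) extri_scheme \<Rightarrow> bool" where
  "extriangulated T \<longleftrightarrow>
     additive_cat T \<and>
     biadditive T (EG T) (\<lambda>_ _ c. pullE T c) (\<lambda>_ _ a. pushE T a) \<and>
     realization_ax T \<and> additive_realization_ax T \<and>
     ET3 T \<and> ET3op T \<and> ET4 T \<and> ET4op T"

definition is_inflation :: "('o, 'm, 'e, 'z) extri_scheme \<Rightarrow> 'o \<Rightarrow> 'o \<Rightarrow> 'm \<Rightarrow> bool" where
  "is_inflation T A B x \<longleftrightarrow> (\<exists>Cc \<delta> y. realE T Cc A \<delta> B x y)"

definition is_deflation :: "('o, 'm, 'e, 'z) extri_scheme \<Rightarrow> 'o \<Rightarrow> 'o \<Rightarrow> 'm \<Rightarrow> bool" where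
  "is_deflation T B Cc y \<longleftrightarrow> (\<exists>A \<delta> x. realE T Cc A \<delta> B x y)"

definition SigMor :: "('o, 'm, 'e, 'z) extri_scheme \<Rightarrow> ('o \<Rightarrow> 'o) \<Rightarrow> ('o \<Rightarrow> 'e) \<Rightarrow>
    'o \<Rightarrow> 'o \<Rightarrow> 'm \<Rightarrow> 'm" where
  "SigMor T Sig dl X Y f =
     (THE s. s \<in> Hom T (Sig X) (Sig Y) \<and> pushE T f (dl X) = pullE T s (dl Y))"

end

theory Submission
  imports Defs
begin

locale L3 =
  fixes T :: "('o, 'm, 'e, 'z) extri_scheme"
    and Z :: 'o and Sig :: "'o \<Rightarrow> 'o" and dl :: "'o \<Rightarrow> 'e"
  assumes ext: "extriangulated T"
    and zero: "is_zero_obj T Z"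
    and sig: "\<forall>Y \<in> Ob T. Sig Y \<in> Ob T \<and> dl Y \<in> Ext T (Sig Y) Y \<and>
                realE T (Sig Y) Y (dl Y) Z (zm T Y Z) (zm T Z (Sig Y))"
begin

lemma cat: "additive_cat T" using ext by (simp add: extriangulated_def)
lemma Ebi: "biadditive T (EG T) (\<lambda>_ _ c. pullE T c) (\<lambda>_ _ a. pushE T a)"
  using ext by (simp add: extriangulated_def)
lemma real: "realization_ax T" using ext by (simp add: extriangulated_def)
lemma areal: "additive_realization_ax T" using ext by (simp add: extriangulated_def)
lemma et3: "ET3 T" using ext by (simp add: extriangulated_def)

lemma grp: "X \<in> Ob T \<Longrightarrow> Y \<in> Ob T \<Longrightarrow> comm_group (HomG T X Y)"
  using cat by (simp add: additive_cat_def)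
lemma cmpH: "X \<in> Ob T \<Longrightarrow> Y \<in> Ob T \<Longrightarrow> Z' \<in> Ob T \<Longrightarrow> f \<in> Hom T X Y \<Longrightarrow> g \<in> Hom T Y Z'
   \<Longrightarrow> cmp T g f \<in> Hom T X Z'"
  using cat unfolding additive_cat_def by (elim conjE) simp
lemma assoc: "W \<in> Ob T \<Longrightarrow> X \<in> Ob T \<Longrightarrow> Y \<in> Ob T \<Longrightarrow> Z' \<in> Ob T \<Longrightarrow>
  f \<in> Hom T W X \<Longrightarrow> g \<in> Hom T X Y \<Longrightarrow> h \<in> Hom T Y Z' \<Longrightarrow>
  cmp T h (cmp T g f) = cmp T (cmp T h g) f"
  using cat unfolding additive_cat_def by (elim conjE) simp
lemma idH: "X \<in> Ob T \<Longrightarrow> idm T X \<in> Hom T X X"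
  using cat unfolding additive_cat_def by (elim conjE) simp
lemma idl: "X \<in> Ob T \<Longrightarrow> Y \<in> Ob T \<Longrightarrow> f \<in> Hom T X Y \<Longrightarrow> cmp T (idm T Y) f = f"
  using cat unfolding additive_cat_def by (elim conjE) simp
lemma idr: "X \<in> Ob T \<Longrightarrow> Y \<in> Ob T \<Longrightarrow> f \<in> Hom T X Y \<Longrightarrow> cmp T f (idm T X) = f"
  using cat unfolding additive_cat_def by (elim conjE) simp
lemma distl: "X \<in> Ob T \<Longrightarrow> Y \<in> Ob T \<Longrightarrow> Z' \<in> Ob T \<Longrightarrow> f1 \<in> Hom T X Y \<Longrightarrow> f2 \<in> Hom T X Y
  \<Longrightarrow> g \<in> Hom T Y Z' \<Longrightarrow> cmp T g (madd T X Y f1 f2) = madd T X Z' (cmp T g f1) (cmp T g f2)"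
  using cat unfolding additive_cat_def by (elim conjE) simp
lemma distr: "X \<in> Ob T \<Longrightarrow> Y \<in> Ob T \<Longrightarrow> Z' \<in> Ob T \<Longrightarrow> f \<in> Hom T X Y \<Longrightarrow> g1 \<in> Hom T Y Z'
  \<Longrightarrow> g2 \<in> Hom T Y Z' \<Longrightarrow> cmp T (madd T Y Z' g1 g2) f = madd T X Z' (cmp T g1 f) (cmp T g2 f)"
  using cat unfolding additive_cat_def by (elim conjE) simp

lemma Egrp: "X \<in> Ob T \<Longrightarrow> Y \<in> Ob T \<Longrightarrow> comm_group (EG T X Y)"
  using Ebi by (simp add: biadditive_def)
lemma push_id: "X \<in> Ob T \<Longrightarrow> Y \<in> Ob T \<Longrightarrow> u \<in> carrier (EG T X Y) \<Longrightarrow> pushE T (idm T Y) u = u"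
  using Ebi unfolding biadditive_def by (elim conjE) simp
lemma pull_id: "X \<in> Ob T \<Longrightarrow> Y \<in> Ob T \<Longrightarrow> u \<in> carrier (EG T X Y) \<Longrightarrow> pullE T (idm T X) u = u"
  using Ebi unfolding biadditive_def by (elim conjE) simp
lemma push_comp: "X \<in> Ob T \<Longrightarrow> Y \<in> Ob T \<Longrightarrow> Y' \<in> Ob T \<Longrightarrow> Y'' \<in> Ob T \<Longrightarrow>
  a \<in> Hom T Y Y' \<Longrightarrow> a' \<in> Hom T Y' Y'' \<Longrightarrow> u \<in> carrier (EG T X Y) \<Longrightarrow>
  pushE T (cmp T a' a) u = pushE T a' (pushE T a u)"
  using Ebi unfolding biadditive_def by (elim conjE) simp
lemma pull_comp: "X \<in> Ob T \<Longrightarrow> X' \<in> Ob T \<Longrightarrow> X'' \<in> Ob T \<Longrightarrow> Y \<in> Ob T \<Longrightarrow>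
  c \<in> Hom T X' X \<Longrightarrow> c' \<in> Hom T X'' X' \<Longrightarrow> u \<in> carrier (EG T X Y) \<Longrightarrow>
  pullE T (cmp T c c') u = pullE T c' (pullE T c u)"
  using Ebi unfolding biadditive_def by (elim conjE) simp
lemma pull_push: "X \<in> Ob T \<Longrightarrow> X' \<in> Ob T \<Longrightarrow> Y \<in> Ob T \<Longrightarrow> Y' \<in> Ob T \<Longrightarrow>
  c \<in> Hom T X' X \<Longrightarrow> a \<in> Hom T Y Y' \<Longrightarrow> u \<in> carrier (EG T X Y) \<Longrightarrow>
  pullE T c (pushE T a u) = pushE T a (pullE T c u)"
  using Ebi unfolding biadditive_def by (elim conjE) simp
lemma push_add: "X \<in> Ob T \<Longrightarrow> Y \<in> Ob T \<Longrightarrow> Y' \<in> Ob T \<Longrightarrow> a1 \<in> Hom T Y Y' \<Longrightarrow> a2 \<in> Hom T Y Y'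
  \<Longrightarrow> u \<in> carrier (EG T X Y) \<Longrightarrow>
  pushE T (madd T Y Y' a1 a2) u = pushE T a1 u \<otimes>\<^bsub>EG T X Y'\<^esub> pushE T a2 u"
  using Ebi unfolding biadditive_def by (elim conjE) simp
lemma pull_add: "X \<in> Ob T \<Longrightarrow> X' \<in> Ob T \<Longrightarrow> Y \<in> Ob T \<Longrightarrow> c1 \<in> Hom T X' X \<Longrightarrow> c2 \<in> Hom T X' X
  \<Longrightarrow> u \<in> carrier (EG T X Y) \<Longrightarrow>
  pullE T (madd T X' X c1 c2) u = pullE T c1 u \<otimes>\<^bsub>EG T X' Y\<^esub> pullE T c2 u"
  using Ebi unfolding biadditive_def by (elim conjE) simp
lemma pull_hom: "X \<in> Ob T \<Longrightarrow> X' \<in> Ob T \<Longrightarrow> Y \<in> Ob T \<Longrightarrow> c \<in> Hom T X' X \<Longrightarrow>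
  pullE T c \<in> hom (EG T X Y) (EG T X' Y)"
  using Ebi unfolding biadditive_def by (elim conjE) simp
lemma push_hom: "X \<in> Ob T \<Longrightarrow> Y \<in> Ob T \<Longrightarrow> Y' \<in> Ob T \<Longrightarrow> a \<in> Hom T Y Y' \<Longrightarrow>
  pushE T a \<in> hom (EG T X Y) (EG T X Y')"
  using Ebi unfolding biadditive_def by (elim conjE) simp

lemma ZOb: "Z \<in> Ob T" using zero by (simp add: is_zero_obj_def)

lemma zmH: "X \<in> Ob T \<Longrightarrow> Y \<in> Ob T \<Longrightarrow> zm T X Y \<in> Hom T X Y"
proof -
  assume "X \<in> Ob T" "Y \<in> Ob T"
  then interpret G: comm_group "HomG T X Y" by (rule grp)
  show ?thesis by (simp add: Hom_def zm_def)
qed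

lemma zl: assumes "W \<in> Ob T" "X \<in> Ob T" "Y \<in> Ob T" "g \<in> Hom T W X"
  shows "cmp T (zm T X Y) g = zm T W Y"
proof -
  interpret G: comm_group "HomG T W Y" using assms grp by blast
  interpret H: comm_group "HomG T X Y" using assms grp by blast
  have zz: "madd T X Y (zm T X Y) (zm T X Y) = zm T X Y" by (simp add: madd_def zm_def)
  have zc: "cmp T (zm T X Y) g \<in> carrier (HomG T W Y)"
    using cmpH[OF assms(1,2,3) assms(4) zmH[OF assms(2,3)]] by (simp add: Hom_def)
  have "cmp T (zm T X Y) g = madd T W Y (cmp T (zm T X Y) g) (cmp T (zm T X Y) g)"
    using distr[OF assms(1,2,3) assms(4) zmH[OF assms(2,3)] zmH[OF assms(2,3)]] zz by simp
  hence "\<one>\<^bsub>HomG T W Y\<^esub> = cmp T (zm T X Y) g"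
    using zc G.l_cancel_one' by (simp add: madd_def)
  thus ?thesis by (simp add: zm_def)
qed

lemma Zuniq: assumes "X \<in> Ob T" "f \<in> Hom T X Z" "g \<in> Hom T X Z" shows "f = g"
proof -
  have "card (Hom T X Z) = 1" using zero assms(1) by (simp add: is_zero_obj_def)
  then obtain x where "Hom T X Z = {x}" by (rule card_1_singletonE)
  thus ?thesis using assms by simp
qed

lemma kill: assumes W: "W \<in> Ob T" and Y: "Y \<in> Ob T" and c: "c \<in> Hom T W (Sig Y)"
  and p: "pullE T c (dl Y) = \<one>\<^bsub>EG T W Y\<^esub>"
  shows "c = zm T W (Sig Y)"
proof -
  have SY: "Sig Y \<in> Ob T" and dY: "dl Y \<in> Ext T (Sig Y) Y"
   and rY: "realE T (Sig Y) Y (dl Y) Z (zm T Y Z) (zm T Z (Sig Y))" using sig Y by auto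
  obtain P i1 i2 p1 p2 where bp: "is_biproduct T Y W P i1 i2 p1 p2"
  proof -
    have "\<forall>A\<in>Ob T. \<forall>B\<in>Ob T. \<exists>P i1 i2 p1 p2. is_biproduct T A B P i1 i2 p1 p2"
      using cat unfolding additive_cat_def by (elim conjE) assumption
    thus ?thesis using Y W that by blast
  qed
  have r1: "realE T W Y (\<one>\<^bsub>EG T W Y\<^esub>) P i1 p2"
    using areal bp Y W unfolding additive_realization_ax_def by blast
  interpret E: comm_group "EG T W Y" using Egrp W Y by blast
  have "pushE T (idm T Y) (\<one>\<^bsub>EG T W Y\<^esub>) = \<one>\<^bsub>EG T W Y\<^esub>"
    using push_id[OF W Y] by simp
  hence eq: "pushE T (idm T Y) (\<one>\<^bsub>EG T W Y\<^esub>) = pullE T c (dl Y)" using p by simp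
  obtain b where b: "b \<in> Hom T P Z" "cmp T (zm T Z (Sig Y)) b = cmp T c p2"
    using real[unfolded realization_ax_def, THEN conjunct2, THEN conjunct2, THEN conjunct2,
       rule_format, OF r1 rY idH[OF Y] c eq] by blast
  have PO: "P \<in> Ob T" and i2: "i2 \<in> Hom T W P" and p2: "p2 \<in> Hom T P W"
    and pi: "cmp T p2 i2 = idm T W" using bp by (auto simp: is_biproduct_def)
  have "c = cmp T c (cmp T p2 i2)" using idr[OF W SY c] pi by simp
  also have "\<dots> = cmp T (cmp T c p2) i2" using assoc[OF W PO W SY i2 p2 c] .
  also have "\<dots> = cmp T (zm T P (Sig Y)) i2" using b zl[OF PO ZOb SY b(1)] by simp
  also have "\<dots> = zm T W (Sig Y)" using zl[OF W PO SY i2] .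
  finally show ?thesis .
qed

lemma pull_zero: assumes "W \<in> Ob T" "C \<in> Ob T" "A \<in> Ob T" "u \<in> carrier (EG T C A)"
  shows "pullE T (zm T W C) u = \<one>\<^bsub>EG T W A\<^esub>"
proof -
  interpret G: comm_group "HomG T W C" using assms grp by blast
  interpret E: comm_group "EG T W A" using assms Egrp by blast
  have ph: "pullE T (zm T W C) \<in> hom (EG T C A) (EG T W A)"
    using pull_hom assms zmH by blast
  have zc: "pullE T (zm T W C) u \<in> carrier (EG T W A)" using ph assms(4) by (auto simp: hom_def)
  have zz: "madd T W C (zm T W C) (zm T W C) = zm T W C" by (simp add: madd_def zm_def)
  have "pullE T (zm T W C) u = pullE T (zm T W C) u \<otimes>\<^bsub>EG T W A\<^esub> pullE T (zm T W C) u"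
    using pull_add[OF assms(2,1,3) zmH[OF assms(1,2)] zmH[OF assms(1,2)] assms(4)] zz by simp
  thus ?thesis using zc E.l_cancel_one' by simp
qed

lemma uniq: assumes X: "X \<in> Ob T" and Y: "Y \<in> Ob T"
  and s: "s \<in> Hom T (Sig X) (Sig Y)" and s': "s' \<in> Hom T (Sig X) (Sig Y)"
  and e: "pullE T s (dl Y) = pullE T s' (dl Y)"
  shows "s = s'"
proof -
  have SX: "Sig X \<in> Ob T" and SY: "Sig Y \<in> Ob T" and dY: "dl Y \<in> carrier (EG T (Sig Y) Y)"
    using sig X Y by (auto simp: Ext_def)
  interpret G: comm_group "HomG T (Sig X) (Sig Y)" using grp SX SY by blast
  interpret E: comm_group "EG T (Sig X) Y" using Egrp SX Y by blast
  let ?G = "HomG T (Sig X) (Sig Y)"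
  have sc: "s \<in> carrier ?G" "s' \<in> carrier ?G" using s s' by (auto simp: Hom_def)
  define i where "i = inv\<^bsub>?G\<^esub> s'"
  have ic: "i \<in> carrier ?G" using sc i_def by simp
  have ih: "i \<in> Hom T (Sig X) (Sig Y)" using ic by (simp add: Hom_def)
  have ph: "\<And>c. c \<in> Hom T (Sig X) (Sig Y) \<Longrightarrow> pullE T c (dl Y) \<in> carrier (EG T (Sig X) Y)"
    using pull_hom[OF SY SX Y] dY by (auto simp: hom_def)
  have "pullE T s' (dl Y) \<otimes>\<^bsub>EG T (Sig X) Y\<^esub> pullE T i (dl Y) = pullE T (madd T (Sig X) (Sig Y) s' i) (dl Y)"
    using pull_add[OF SY SX Y s' ih dY] by simp
  also have "madd T (Sig X) (Sig Y) s' i = zm T (Sig X) (Sig Y)"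
    using sc by (simp add: madd_def zm_def i_def)
  also have "pullE T (zm T (Sig X) (Sig Y)) (dl Y) = \<one>\<^bsub>EG T (Sig X) Y\<^esub>"
    using pull_zero[OF SX SY Y dY] .
  finally have h1: "pullE T s' (dl Y) \<otimes>\<^bsub>EG T (Sig X) Y\<^esub> pullE T i (dl Y) = \<one>\<^bsub>EG T (Sig X) Y\<^esub>" .
  have dh: "madd T (Sig X) (Sig Y) s i \<in> Hom T (Sig X) (Sig Y)"
    using sc ic by (simp add: madd_def Hom_def)
  have "pullE T (madd T (Sig X) (Sig Y) s i) (dl Y) = pullE T s (dl Y) \<otimes>\<^bsub>EG T (Sig X) Y\<^esub> pullE T i (dl Y)"
    using pull_add[OF SY SX Y s ih dY] by simp
  also have "\<dots> = \<one>\<^bsub>EG T (Sig X) Y\<^esub>" using h1 e by simp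
  finally have "madd T (Sig X) (Sig Y) s i = zm T (Sig X) (Sig Y)"
    using kill[OF SX Y dh] by simp
  hence "s \<otimes>\<^bsub>?G\<^esub> inv\<^bsub>?G\<^esub> s' = \<one>\<^bsub>?G\<^esub>" by (simp add: madd_def zm_def i_def)
  thus ?thesis using sc by (metis G.inv_equality G.inv_inv G.m_comm G.inv_closed G.l_inv G.r_inv G.inv_comm)
qed

lemma exist: assumes X: "X \<in> Ob T" and Y: "Y \<in> Ob T" and f: "f \<in> Hom T X Y"
  shows "\<exists>s \<in> Hom T (Sig X) (Sig Y). pushE T f (dl X) = pullE T s (dl Y)"
proof -
  have rX: "realE T (Sig X) X (dl X) Z (zm T X Z) (zm T Z (Sig X))" using sig X by auto
  have rY: "realE T (Sig Y) Y (dl Y) Z (zm T Y Z) (zm T Z (Sig Y))" using sig Y by auto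
  have "cmp T (idm T Z) (zm T X Z) = cmp T (zm T Y Z) f"
    using Zuniq[OF X] cmpH[OF X ZOb ZOb zmH[OF X ZOb] idH[OF ZOb]] cmpH[OF X Y ZOb f zmH[OF Y ZOb]]
    by blast
  thus ?thesis using et3[unfolded ET3_def, rule_format, OF rX rY f idH[OF ZOb]] by blast
qed

lemma SigMor: assumes X: "X \<in> Ob T" and Y: "Y \<in> Ob T" and f: "f \<in> Hom T X Y"
  shows "SigMor T Sig dl X Y f \<in> Hom T (Sig X) (Sig Y) \<and>
         pushE T f (dl X) = pullE T (SigMor T Sig dl X Y f) (dl Y)"
proof -
  have "\<exists>!s. s \<in> Hom T (Sig X) (Sig Y) \<and> pushE T f (dl X) = pullE T s (dl Y)"
    using exist[OF assms] uniq[OF X Y] by metis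
  thus ?thesis unfolding SigMor_def by (rule theI')
qed

lemma SigMor_eq: assumes X: "X \<in> Ob T" and Y: "Y \<in> Ob T" and f: "f \<in> Hom T X Y"
  and s: "s \<in> Hom T (Sig X) (Sig Y)" and e: "pushE T f (dl X) = pullE T s (dl Y)"
  shows "SigMor T Sig dl X Y f = s"
  using uniq[OF X Y _ s] SigMor[OF assms(1-3)] e by metis

lemma SOb: "Y \<in> Ob T \<Longrightarrow> Sig Y \<in> Ob T" using sig by auto
lemma dlc: "Y \<in> Ob T \<Longrightarrow> dl Y \<in> carrier (EG T (Sig Y) Y)" using sig by (auto simp: Ext_def)

lemma main: "biadditive T (\<lambda>X Y. HomG T X (Sig Y))
           (\<lambda>X' X c h. cmp T h c)
           (\<lambda>Y Y' a h. cmp T (SigMor T Sig dl Y Y' a) h)"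
  unfolding biadditive_def
proof (intro conjI ballI)
  fix X Y assume "X \<in> Ob T" "Y \<in> Ob T"
  thus "comm_group (HomG T X (Sig Y))" using grp SOb by blast
next
  fix X Y Y' a assume X: "X \<in> Ob T" and Y: "Y \<in> Ob T" and Y': "Y' \<in> Ob T" and a: "a \<in> Hom T Y Y'"
  have s: "SigMor T Sig dl Y Y' a \<in> Hom T (Sig Y) (Sig Y')" using SigMor[OF Y Y' a] by blast
  show "(\<lambda>h. cmp T (SigMor T Sig dl Y Y' a) h) \<in> hom (HomG T X (Sig Y)) (HomG T X (Sig Y'))"
    unfolding hom_def
    using cmpH[OF X SOb[OF Y] SOb[OF Y'] _ s] distl[OF X SOb[OF Y] SOb[OF Y'] _ _ s]
    by (auto simp: Hom_def madd_def)
next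
  fix X X' Y c assume X: "X \<in> Ob T" and X': "X' \<in> Ob T" and Y: "Y \<in> Ob T" and c: "c \<in> Hom T X' X"
  show "(\<lambda>h. cmp T h c) \<in> hom (HomG T X (Sig Y)) (HomG T X' (Sig Y))"
    unfolding hom_def
    using cmpH[OF X' X SOb[OF Y] c] distr[OF X' X SOb[OF Y] c]
    by (auto simp: Hom_def madd_def)
next
  fix X Y u assume X: "X \<in> Ob T" and Y: "Y \<in> Ob T" and u: "u \<in> carrier (HomG T X (Sig Y))"
  have uh: "u \<in> Hom T X (Sig Y)" using u by (simp add: Hom_def)
  have "SigMor T Sig dl Y Y (idm T Y) = idm T (Sig Y)"
    using SigMor_eq[OF Y Y idH[OF Y] idH[OF SOb[OF Y]]] push_id[OF SOb[OF Y] Y dlc[OF Y]]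
      pull_id[OF SOb[OF Y] Y dlc[OF Y]] by simp
  thus "cmp T (SigMor T Sig dl Y Y (idm T Y)) u = u"
    using idl[OF X SOb[OF Y] uh] by simp
next
  fix X Y u assume X: "X \<in> Ob T" and Y: "Y \<in> Ob T" and u: "u \<in> carrier (HomG T X (Sig Y))"
  have uh: "u \<in> Hom T X (Sig Y)" using u by (simp add: Hom_def)
  show "cmp T u (idm T X) = u"
    using idr[OF X SOb[OF Y] uh] by simp
next
  fix X Y Y' Y'' a a' u assume X: "X \<in> Ob T" and Y: "Y \<in> Ob T" and Y': "Y' \<in> Ob T" and Y'': "Y'' \<in> Ob T"
    and a: "a \<in> Hom T Y Y'" and a': "a' \<in> Hom T Y' Y''" and u: "u \<in> carrier (HomG T X (Sig Y))"
  have uh: "u \<in> Hom T X (Sig Y)" using u by (simp add: Hom_def)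
  let ?s = "SigMor T Sig dl Y Y' a" and ?s' = "SigMor T Sig dl Y' Y'' a'"
  have s: "?s \<in> Hom T (Sig Y) (Sig Y')" "pushE T a (dl Y) = pullE T ?s (dl Y')" using SigMor[OF Y Y' a] by auto
  have s': "?s' \<in> Hom T (Sig Y') (Sig Y'')" "pushE T a' (dl Y') = pullE T ?s' (dl Y'')" using SigMor[OF Y' Y'' a'] by auto
  have "pushE T (cmp T a' a) (dl Y) = pushE T a' (pushE T a (dl Y))"
    using push_comp[OF SOb[OF Y] Y Y' Y'' a a' dlc[OF Y]] .
  also have "\<dots> = pushE T a' (pullE T ?s (dl Y'))" using s by simp
  also have "\<dots> = pullE T ?s (pushE T a' (dl Y'))" using pull_push[OF SOb[OF Y'] SOb[OF Y] Y' Y'' s(1) a' dlc[OF Y']] by simp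
  also have "\<dots> = pullE T ?s (pullE T ?s' (dl Y''))" using s' by simp
  also have "\<dots> = pullE T (cmp T ?s' ?s) (dl Y'')" using pull_comp[OF SOb[OF Y''] SOb[OF Y'] SOb[OF Y] Y'' s'(1) s(1) dlc[OF Y'']] by simp
  finally have "SigMor T Sig dl Y Y'' (cmp T a' a) = cmp T ?s' ?s"
    using SigMor_eq[OF Y Y'' cmpH[OF Y Y' Y'' a a'] cmpH[OF SOb[OF Y] SOb[OF Y'] SOb[OF Y''] s(1) s'(1)]] by simp
  thus "cmp T (SigMor T Sig dl Y Y'' (cmp T a' a)) u = cmp T ?s' (cmp T ?s u)"
    using assoc[OF X SOb[OF Y] SOb[OF Y'] SOb[OF Y''] uh s(1) s'(1)] by simp
next
  fix X X' X'' Y c c' u assume X: "X \<in> Ob T" and X': "X' \<in> Ob T" and X'': "X'' \<in> Ob T" and Y: "Y \<in> Ob T"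
    and c: "c \<in> Hom T X' X" and c': "c' \<in> Hom T X'' X'" and u: "u \<in> carrier (HomG T X (Sig Y))"
  have uh: "u \<in> Hom T X (Sig Y)" using u by (simp add: Hom_def)
  show "cmp T u (cmp T c c') = cmp T (cmp T u c) c'" using assoc[OF X'' X' X SOb[OF Y] c' c uh] .
next
  fix X X' Y Y' c a u assume X: "X \<in> Ob T" and X': "X' \<in> Ob T" and Y: "Y \<in> Ob T" and Y': "Y' \<in> Ob T"
    and c: "c \<in> Hom T X' X" and a: "a \<in> Hom T Y Y'" and u: "u \<in> carrier (HomG T X (Sig Y))"
  have uh: "u \<in> Hom T X (Sig Y)" using u by (simp add: Hom_def)
  have s: "SigMor T Sig dl Y Y' a \<in> Hom T (Sig Y) (Sig Y')" using SigMor[OF Y Y' a] by blast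
  show "cmp T (cmp T (SigMor T Sig dl Y Y' a) u) c = cmp T (SigMor T Sig dl Y Y' a) (cmp T u c)"
    using assoc[OF X' X SOb[OF Y] SOb[OF Y'] c uh s] by simp
next
  fix X Y Y' a1 a2 u assume X: "X \<in> Ob T" and Y: "Y \<in> Ob T" and Y': "Y' \<in> Ob T"
    and a1: "a1 \<in> Hom T Y Y'" and a2: "a2 \<in> Hom T Y Y'" and u: "u \<in> carrier (HomG T X (Sig Y))"
  have uh: "u \<in> Hom T X (Sig Y)" using u by (simp add: Hom_def)
  let ?s1 = "SigMor T Sig dl Y Y' a1" and ?s2 = "SigMor T Sig dl Y Y' a2"
  have s1: "?s1 \<in> Hom T (Sig Y) (Sig Y')" "pushE T a1 (dl Y) = pullE T ?s1 (dl Y')" using SigMor[OF Y Y' a1] by auto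
  have s2: "?s2 \<in> Hom T (Sig Y) (Sig Y')" "pushE T a2 (dl Y) = pullE T ?s2 (dl Y')" using SigMor[OF Y Y' a2] by auto
  interpret G1: comm_group "HomG T Y Y'" using grp Y Y' by blast
  interpret G2: comm_group "HomG T (Sig Y) (Sig Y')" using grp SOb Y Y' by blast
  have ah: "madd T Y Y' a1 a2 \<in> Hom T Y Y'" using a1 a2 by (simp add: Hom_def madd_def)
  have sh: "madd T (Sig Y) (Sig Y') ?s1 ?s2 \<in> Hom T (Sig Y) (Sig Y')" using s1 s2 by (simp add: Hom_def madd_def)
  have "pushE T (madd T Y Y' a1 a2) (dl Y) = pushE T a1 (dl Y) \<otimes>\<^bsub>EG T (Sig Y) Y'\<^esub> pushE T a2 (dl Y)"
    using push_add[OF SOb[OF Y] Y Y' a1 a2 dlc[OF Y]] .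
  also have "\<dots> = pullE T (madd T (Sig Y) (Sig Y') ?s1 ?s2) (dl Y')"
    using s1 s2 pull_add[OF SOb[OF Y'] SOb[OF Y] Y' s1(1) s2(1) dlc[OF Y']] by simp
  finally have "SigMor T Sig dl Y Y' (madd T Y Y' a1 a2) = madd T (Sig Y) (Sig Y') ?s1 ?s2"
    using SigMor_eq[OF Y Y' ah sh] by simp
  thus "cmp T (SigMor T Sig dl Y Y' (madd T Y Y' a1 a2)) u
        = cmp T ?s1 u \<otimes>\<^bsub>HomG T X (Sig Y')\<^esub> cmp T ?s2 u"
    using distr[OF X SOb[OF Y] SOb[OF Y'] uh s1(1) s2(1)] by (simp add: madd_def)
next
  fix X X' Y c1 c2 u assume X: "X \<in> Ob T" and X': "X' \<in> Ob T" and Y: "Y \<in> Ob T"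
    and c1: "c1 \<in> Hom T X' X" and c2: "c2 \<in> Hom T X' X" and u: "u \<in> carrier (HomG T X (Sig Y))"
  have uh: "u \<in> Hom T X (Sig Y)" using u by (simp add: Hom_def)
  show "cmp T u (madd T X' X c1 c2) = cmp T u c1 \<otimes>\<^bsub>HomG T X' (Sig Y)\<^esub> cmp T u c2"
    using distl[OF X' X SOb[OF Y] c1 c2 uh] by (simp add: madd_def)
qed

end

theorem lemma3p9:
  fixes T :: "('o, 'm, 'e, 'z) extri_scheme"
    and Z :: 'o and Sig :: "'o \<Rightarrow> 'o" and dl :: "'o \<Rightarrow> 'e"
  assumes ext: "extriangulated T"
    and zero: "is_zero_obj T Z"
    and infl: "\<forall>A \<in> Ob T. is_inflation T A Z (zm T A Z)"
    and defl: "\<forall>A \<in> Ob T. is_deflation T Z A (zm T Z A)"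
    and sig: "\<forall>Y \<in> Ob T. Sig Y \<in> Ob T \<and> dl Y \<in> Ext T (Sig Y) Y \<and>
                realE T (Sig Y) Y (dl Y) Z (zm T Y Z) (zm T Z (Sig Y))"
  shows "biadditive T (\<lambda>X Y. HomG T X (Sig Y))
           (\<lambda>X' X c h. cmp T h c)
           (\<lambda>Y Y' a h. cmp T (SigMor T Sig dl Y Y' a) h)"
  using L3.main L3.intro assms by metis

end
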